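(* Let $g(x,y)=xy$. Let $t>0$ and let $I=[a,a+3t]$, $J=[b,b+3t]$ with $\tfrac23\le a\le b\le 1$, and assume $I$ and $J$ are either identical or disjoint. Write $\ddot I=[a,a+t]\cup[a+2t,a+3t]$ and $\ddot J=[b,b+t]\cup[b+2t,b+3t]$. Then: (i) if $a<b$, then $g(\ddot I,\ddot J) = g(I,J)$; (ii) if $a=b$ (so $I=J$), then $g(\ddot I,\ddot I) = g(I,I)\setminus\big((a+2t)^2-t^2,\,(a+2t)^2\big)$.
   Context: For sets $A,B\subset\mathbb{R}$, $g(A,B)=\{xy: x\in A, y\in B\}$. *)

theory Defs
  imports Complex_Main
begin

definition g :: "real set \<Rightarrow> real set \<Rightarrow> real set" where
  "g A B = {x * y | x y. x \<in> A \<and> y \<in> B}"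

end

theory Submission
  imports Defs
begin

lemma g_Un1: "g (A \<union> B) C = g A C \<union> g B C"
  unfolding g_def by blast

lemma g_Un2: "g A (B \<union> C) = g A B \<union> g A C"
  unfolding g_def by blast

lemma g_ivl:
  fixes p q r s :: real
  assumes "0 < p" "p \<le> q" "0 < r" "r \<le> s"
  shows "g {p..q} {r..s} = {p*r..q*s}"
proof
  show "g {p..q} {r..s} \<subseteq> {p*r..q*s}"
  proof
    fix z assume "z \<in> g {p..q} {r..s}"
    then obtain x y where z: "z = x*y" "p \<le> x" "x \<le> q" "r \<le> y" "y \<le> s"
      unfolding g_def by auto
    have "p*r \<le> x*y" using z assms by (intro mult_mono) auto
    moreover have "x*y \<le> q*s" using z assms by (intro mult_mono) auto
    ultimately show "z \<in> {p*r..q*s}" using z by auto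
  qed
next
  show "{p*r..q*s} \<subseteq> g {p..q} {r..s}"
  proof
    fix z assume z: "z \<in> {p*r..q*s}"
    show "z \<in> g {p..q} {r..s}"
    proof (cases "z \<le> q*r")
      case True
      have "z/r \<ge> p" using z assms by (simp add: field_simps)
      moreover have "z/r \<le> q" using True assms by (simp add: field_simps)
      moreover have "z = (z/r)*r" using assms by simp
      ultimately show ?thesis unfolding g_def using assms by fastforce
    next
      case False
      have qp: "q > 0" using assms by simp
      have "z/q \<ge> r" using False qp by (simp add: field_simps)
      moreover have "z/q \<le> s" using z qp by (simp add: field_simps)
      moreover have "z = q*(z/q)" using qp by simp
      ultimately show ?thesis unfolding g_def using assms by fastforce
    qed
  qed
qed

lemma chain4:
  fixes l1 l2 l3 l4 u1 u2 u3 u4 :: real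
  assumes "l1 \<le> l2" "l2 \<le> l3" "l3 \<le> l4" "u1 \<le> u2" "u2 \<le> u3" "u3 \<le> u4"
    "l2 \<le> u1" "l3 \<le> u2" "l4 \<le> u3" "l1 \<le> u1"
  shows "{l1..u1} \<union> {l2..u2} \<union> ({l3..u3} \<union> {l4..u4}) = {l1..u4}"
  using assms by auto

lemma chain3:
  fixes l1 l2 l3 u1 u2 u3 :: real
  assumes "l1 \<le> l2" "l2 \<le> u1" "u1 \<le> u2" "u2 < l3" "l3 \<le> u3"
  shows "{l1..u1} \<union> {l2..u2} \<union> ({l2..u2} \<union> {l3..u3}) = {l1..u3} - {u2<..<l3}"
  using assms by auto

theorem lemma3p8:
  fixes a b t :: real
  assumes "t > 0"
    and "2/3 \<le> a" and "a \<le> b" and "b \<le> 1"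
    and "{a..a+3*t} = {b..b+3*t} \<or> {a..a+3*t} \<inter> {b..b+3*t} = {}"
  shows "(a < b \<longrightarrow>
            g ({a..a+t} \<union> {a+2*t..a+3*t}) ({b..b+t} \<union> {b+2*t..b+3*t})
              = g {a..a+3*t} {b..b+3*t})
       \<and> (a = b \<longrightarrow>
            g ({a..a+t} \<union> {a+2*t..a+3*t}) ({a..a+t} \<union> {a+2*t..a+3*t})
              = g {a..a+3*t} {a..a+3*t} - {(a+2*t)^2 - t^2 <..< (a+2*t)^2})"
proof (intro conjI impI)
  have a0: "a > 0" using assms by simp
  assume ab: "a < b"
  have "b > a + 3*t"
  proof (rule ccontr)
    assume "\<not> b > a + 3*t"
    then have "b \<in> {a..a+3*t} \<inter> {b..b+3*t}" using ab assms(1) by auto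
    moreover have "{a..a+3*t} \<noteq> {b..b+3*t}"
    proof
      assume "{a..a+3*t} = {b..b+3*t}"
      then have "a \<in> {b..b+3*t}" using assms(1) by auto
      then show False using ab by auto
    qed
    ultimately show False using assms(5) by auto
  qed
  then have bt: "b \<ge> a + t" using assms(1) by simp
  have b0: "b > 0" using a0 ab by simp
  have at: "a*t > 0" "b*t > 0" "t*t > 0" using a0 b0 assms(1) by simp_all
  have k1: "b*t \<ge> a*t + t*t" using mult_right_mono[OF bt, of t] assms(1)
    by (simp add: algebra_simps)
  have k2: "3*a*t \<ge> b*t" using mult_right_mono[of b "3*a" t] assms by simp
  have k3: "a*t \<le> b*t" using mult_right_mono[of a b t] assms by simp
  have k4: "b*t \<le> 3*a*t + 3*t*t" "a*t \<le> b*t + t*t" using k2 k3 at by simp_all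
  have eq: "g ({a..a+t} \<union> {a+2*t..a+3*t}) ({b..b+t} \<union> {b+2*t..b+3*t})
     = {a*b..(a+t)*(b+t)} \<union> {a*(b+2*t)..(a+t)*(b+3*t)} \<union>
       ({(a+2*t)*b..(a+3*t)*(b+t)} \<union> {(a+2*t)*(b+2*t)..(a+3*t)*(b+3*t)})"
    unfolding g_Un1 g_Un2 using a0 b0 assms(1)
    by (subst (1 2 3 4) g_ivl; simp)+ (auto simp: Un_ac)
  show "g ({a..a+t} \<union> {a+2*t..a+3*t}) ({b..b+t} \<union> {b+2*t..b+3*t})
              = g {a..a+3*t} {b..b+3*t}"
    unfolding eq using a0 b0 assms(1)
    apply (subst g_ivl; simp?)
    apply (rule chain4)
    using at k1 k4 k3 by (simp_all add: algebra_simps)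
next
  assume ab: "a = b"
  have a0: "a > 0" using assms by simp
  have at: "a*t > 0" "t*t > 0" using a0 assms(1) by simp_all
  have eq: "g ({a..a+t} \<union> {a+2*t..a+3*t}) ({a..a+t} \<union> {a+2*t..a+3*t})
     = {a*a..(a+t)*(a+t)} \<union> {a*(a+2*t)..(a+t)*(a+3*t)} \<union>
       ({a*(a+2*t)..(a+t)*(a+3*t)} \<union> {(a+2*t)*(a+2*t)..(a+3*t)*(a+3*t)})"
    unfolding g_Un1 g_Un2 using a0 assms(1)
    by (subst (1 2 3 4) g_ivl; simp)+ (auto simp: Un_ac algebra_simps)
  have e2: "(a+2*t)^2 - t^2 = (a+t)*(a+3*t)" "(a+2*t)^2 = (a+2*t)*(a+2*t)"
    by (simp_all add: algebra_simps power2_eq_square)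
  show "g ({a..a+t} \<union> {a+2*t..a+3*t}) ({a..a+t} \<union> {a+2*t..a+3*t})
              = g {a..a+3*t} {a..a+3*t} - {(a+2*t)^2 - t^2 <..< (a+2*t)^2}"
    unfolding eq e2(1) unfolding e2(2) using a0 assms(1)
    apply (subst g_ivl; simp?)
    apply (rule chain3)
    using at by (simp_all add: algebra_simps)
qed

end
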